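(* Let $L=\{\ell_1,\dots,\ell_n\}$, $R=\{r_1,\dots,r_d\}$ and let $T_1,T_2$ be two compatible spanning trees of the complete bipartite graph on $L\sqcup R$, where $T_1$ has right degree vector $v$ and $T_2$ has right degree vector $v+e_p-e_q$ for some $p,q\in[d]$. Then $T_1\cap T_2$ contains a maximal tope with right degree vector $v-\mathbf{1}_{[d]\setminus\{p\}}$. Furthermore, if $\ell_s$ has degree $1$ in both $T_1$ and $T_2$, then $T_1$ and $T_2$ contain the same edge incident with $\ell_s$.
   Context: Graphs are identified with edge sets; right degree vector $=(\deg r_1,\dots,\deg r_d)$; $e_p$ is a standard unit vector and $\mathbf{1}_A$ the 0/1 indicator vector of $A\subseteq[d]$. Two graphs are compatible if for all $J\subseteq L$, $I\subseteq R$ such that both contain a perfect matching between $J$ and $I$, these perfect matchings are equal. A maximal tope with right degree vector $w$ is a bipartite graph on $L\sqcup R$ in which every node of $L$ has degree exactly $1$ and $r_i$ has degree $w_i$. *)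

theory Defs
  imports Main
begin

text \<open>Bipartite graphs on L = {l_1..l_n} and R = {r_1..r_d} are edge sets
  G of pairs (i, j), meaning the edge l_i r_j, with i in {1..n}, j in {1..d}.
  Vertices are encoded as Inl i (for l_i) and Inr j (for r_j).\<close>

definition bip_graph :: "nat \<Rightarrow> nat \<Rightarrow> (nat \<times> nat) set \<Rightarrow> bool" where
  "bip_graph n d G \<longleftrightarrow> G \<subseteq> {1..n} \<times> {1..d}"

definition vertices :: "nat \<Rightarrow> nat \<Rightarrow> (nat + nat) set" where
  "vertices n d = Inl ` {1..n} \<union> Inr ` {1..d}"

definition adj :: "(nat \<times> nat) set \<Rightarrow> (nat + nat) \<Rightarrow> (nat + nat) \<Rightarrow> bool" where
  "adj G u v \<longleftrightarrow> (\<exists>i j. (i, j) \<in> G \<and> ((u = Inl i \<and> v = Inr j) \<or> (u = Inr j \<and> v = Inl i)))"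

definition connected_on :: "nat \<Rightarrow> nat \<Rightarrow> (nat \<times> nat) set \<Rightarrow> bool" where
  "connected_on n d G \<longleftrightarrow>
     (\<forall>u\<in>vertices n d. \<forall>v\<in>vertices n d. (u, v) \<in> {(x, y). adj G x y}\<^sup>*)"

definition is_cycle :: "(nat \<times> nat) set \<Rightarrow> (nat + nat) list \<Rightarrow> bool" where
  "is_cycle G cs \<longleftrightarrow> length cs \<ge> 3 \<and> distinct cs \<and>
     (\<forall>k < length cs - 1. adj G (cs ! k) (cs ! Suc k)) \<and> adj G (last cs) (hd cs)"

definition acyclic_graph :: "(nat \<times> nat) set \<Rightarrow> bool" where
  "acyclic_graph G \<longleftrightarrow> \<not> (\<exists>cs. is_cycle G cs)"

definition spanning_tree :: "nat \<Rightarrow> nat \<Rightarrow> (nat \<times> nat) set \<Rightarrow> bool" where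
  "spanning_tree n d T \<longleftrightarrow> bip_graph n d T \<and> connected_on n d T \<and> acyclic_graph T"

definition ldeg :: "(nat \<times> nat) set \<Rightarrow> nat \<Rightarrow> nat" where
  "ldeg G i = card {j. (i, j) \<in> G}"

definition rdeg :: "(nat \<times> nat) set \<Rightarrow> nat \<Rightarrow> nat" where
  "rdeg G j = card {i. (i, j) \<in> G}"

definition perfect_matching :: "(nat \<times> nat) set \<Rightarrow> nat set \<Rightarrow> nat set \<Rightarrow> (nat \<times> nat) set \<Rightarrow> bool" where
  "perfect_matching G J I M \<longleftrightarrow> M \<subseteq> G \<and> M \<subseteq> J \<times> I \<and>
     (\<forall>i\<in>J. \<exists>!j. (i, j) \<in> M) \<and> (\<forall>j\<in>I. \<exists>!i. (i, j) \<in> M)"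

definition compatible :: "nat \<Rightarrow> nat \<Rightarrow> (nat \<times> nat) set \<Rightarrow> (nat \<times> nat) set \<Rightarrow> bool" where
  "compatible n d G1 G2 \<longleftrightarrow>
     (\<forall>J \<subseteq> {1..n}. \<forall>I \<subseteq> {1..d}. \<forall>M1 M2.
        perfect_matching G1 J I M1 \<and> perfect_matching G2 J I M2 \<longrightarrow> M1 = M2)"

definition maximal_tope :: "nat \<Rightarrow> nat \<Rightarrow> (nat \<Rightarrow> int) \<Rightarrow> (nat \<times> nat) set \<Rightarrow> bool" where
  "maximal_tope n d w H \<longleftrightarrow> bip_graph n d H \<and>
     (\<forall>i\<in>{1..n}. ldeg H i = 1) \<and> (\<forall>j\<in>{1..d}. int (rdeg H j) = w j)"

end

theory Submission
  imports Defs "HOL-Library.Transitive_Closure_Table"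
begin

abbreviation conn :: "(nat \<times> nat) set \<Rightarrow> (nat + nat) \<Rightarrow> (nat + nat) \<Rightarrow> bool" where
  "conn G x y \<equiv> (x, y) \<in> {(a, b). adj G a b}\<^sup>*"

lemma adj_sym: "adj G u v = adj G v u"
  unfolding adj_def by blast

lemma conn_sym: assumes "conn G x y" shows "conn G y x"
  using assms
proof (induction rule: rtrancl_induct)
  case base then show ?case by simp
next
  case (step y z)
  then have "(z, y) \<in> {(a, b). adj G a b}" using adj_sym by blast
  then show ?case using step(3) by (rule converse_rtrancl_into_rtrancl)
qed

lemma adj_mono: "adj G u v \<Longrightarrow> G \<subseteq> G' \<Longrightarrow> adj G' u v"
  unfolding adj_def by blast

lemma conn_mono: assumes "conn G x y" "G \<subseteq> G'" shows "conn G' x y"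
proof -
  have "{(a, b). adj G a b} \<subseteq> {(a, b). adj G' a b}" using assms(2) adj_mono by blast
  then show ?thesis using assms(1) rtrancl_mono by blast
qed

lemma conn_step: "conn G x y \<Longrightarrow> adj G y z \<Longrightarrow> conn G x z"
  by (simp add: rtrancl.rtrancl_into_rtrancl)

lemma adj_single: "adj {e} u v \<longleftrightarrow> (u = Inl (fst e) \<and> v = Inr (snd e)) \<or> (u = Inr (snd e) \<and> v = Inl (fst e))"
  unfolding adj_def by (cases e) auto

lemma adj_Diff: "adj G u v \<Longrightarrow> \<not> adj (G - {e}) u v \<Longrightarrow> adj {e} u v"
  unfolding adj_def by blast

lemma adj_in: "adj {e} u v \<Longrightarrow> e \<in> G \<Longrightarrow> adj G u v"
  unfolding adj_def by blast

lemma adj_ends: "adj {e} u v \<Longrightarrow> adj {e} a b \<Longrightarrow> a = u \<or> a = v"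
  unfolding adj_single by auto

lemma adj_Diff_not: "adj {e} u v \<Longrightarrow> \<not> adj (G - {e}) u v"
  unfolding adj_def by auto

lemma L1:
  assumes "(x, y) \<in> {(a, b). adj G a b}\<^sup>*"
  shows "conn (G - {e}) x y \<or> (\<exists>a b. adj {e} a b \<and> conn (G - {e}) x a)"
  using assms
proof (induction rule: rtrancl_induct)
  case base then show ?case by simp
next
  case (step y z)
  show ?case
  proof (cases "adj (G - {e}) y z")
    case True
    then show ?thesis using step(3) conn_step by blast
  next
    case False
    then have "adj {e} y z" using step(2) adj_Diff by blast
    then show ?thesis using step(3) by blast
  qed
qed

lemma L2:
  assumes "(x, y) \<in> {(a, b). adj G a b} ^^ m"
  shows "conn (G - {e}) x y \<or> (\<forall>a b. adj {e} a b \<longrightarrow> (\<exists>m'\<le>m. (x, a) \<in> {(a, b). adj G a b} ^^ m'))"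
  using assms
proof (induction m arbitrary: y)
  case 0 then show ?case by simp
next
  case (Suc m)
  from Suc.prems obtain z where z: "(x, z) \<in> {(a, b). adj G a b} ^^ m" "adj G z y"
    by (auto elim: relpow_Suc_E)
  show ?case
  proof (cases "adj (G - {e}) z y")
    case True
    from Suc.IH[OF z(1)] show ?thesis
    proof
      assume "conn (G - {e}) x z" then show ?thesis using True conn_step by blast
    next
      assume "\<forall>a b. adj {e} a b \<longrightarrow> (\<exists>m'\<le>m. (x, a) \<in> {(a, b). adj G a b} ^^ m')"
      then show ?thesis using le_SucI by blast
    qed
  next
    case False
    then have e: "adj {e} z y" using z(2) adj_Diff by blast
    have "\<exists>m'\<le>Suc m. (x, a) \<in> {(a, b). adj G a b} ^^ m'" if "adj {e} a b" for a b
    proof -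
      from adj_ends[OF e that] show ?thesis
      proof
        assume "a = z" then show ?thesis using z(1) le_SucI by blast
      next
        assume "a = y" then show ?thesis using Suc.prems by blast
      qed
    qed
    then show ?thesis by blast
  qed
qed

lemma bridge:
  assumes "acyclic_graph T" "e \<in> T" "adj {e} a b"
  shows "\<not> conn (T - {e}) a b"
proof
  assume c: "conn (T - {e}) a b"
  let ?P = "\<lambda>x y. adj (T - {e}) x y"
  have "?P\<^sup>*\<^sup>* a b" using c by (simp add: rtranclp_rtrancl_eq)
  then obtain xs0 where "rtrancl_path ?P a xs0 b" by (auto simp: rtranclp_eq_rtrancl_path)
  then obtain xs where p: "rtrancl_path ?P a xs b" and dist: "distinct (a # xs)"
    by (rule rtrancl_path_distinct)
  have ab: "a \<noteq> b" using assms(3) unfolding adj_single by auto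
  have ne: "xs \<noteq> []" using p ab by (auto elim: rtrancl_path.cases)
  have lastb: "last xs = b" using rtrancl_path_last[OF p ne] .
  have len: "length xs \<ge> 2"
  proof (rule ccontr)
    assume "\<not> length xs \<ge> 2"
    with ne have "length xs = 1" by (cases xs) (auto simp: Suc_le_eq)
    then obtain x where xs: "xs = [x]" by (auto simp: length_Suc_conv)
    with lastb have "x = b" by simp
    with rtrancl_path_nth[OF p, of 0] xs have "?P a b" by simp
    with adj_Diff_not[OF assms(3)] show False by simp
  qed
  have "is_cycle T (a # xs)"
    unfolding is_cycle_def
  proof (intro conjI allI impI)
    show "3 \<le> length (a # xs)" using len by simp
    show "distinct (a # xs)" by fact
    fix k assume k: "k < length (a # xs) - 1"
    then have "?P ((a # xs) ! k) (xs ! k)" using rtrancl_path_nth[OF p] by simp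
    then show "adj T ((a # xs) ! k) ((a # xs) ! Suc k)" using adj_mono by auto
  next
    show "adj T (last (a # xs)) (hd (a # xs))"
      using ne lastb adj_in[OF assms(3) assms(2)] adj_sym by simp
  qed
  with assms(1) show False unfolding acyclic_graph_def by blast
qed


lemma split_conn:
  assumes "connected_on n d T" "e \<in> T" "adj {e} u w" "u \<in> vertices n d" "x \<in> vertices n d"
  shows "conn (T - {e}) x u \<or> conn (T - {e}) x w"
proof -
  have "conn T x u" using assms(1,4,5) unfolding connected_on_def by blast
  from L1[OF this, of e] show ?thesis
  proof
    assume "\<exists>a b. adj {e} a b \<and> conn (T - {e}) x a"
    then obtain a b where "adj {e} a b" "conn (T - {e}) x a" by blast
    with adj_ends[OF assms(3)] show ?thesis by blast
  qed simp
qed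

lemma uniq_sep:
  assumes "connected_on n d T" "u \<in> vertices n d" "root \<in> vertices n d"
    "e1 \<in> T" "e2 \<in> T" "adj {e1} u w1" "adj {e2} u w2"
    "\<not> conn (T - {e1}) root u" "\<not> conn (T - {e2}) root u"
  shows "e1 = e2"
proof (rule ccontr)
  assume ne: "e1 \<noteq> e2"
  from split_conn[OF assms(1) assms(5) assms(7) assms(2) assms(3)] assms(9)
  have c2: "conn (T - {e2}) root w2" by blast
  have e1in: "e1 \<in> T - {e2}" and e2in: "e2 \<in> T - {e1}" using ne assms(4,5) by auto
  from L1[OF c2, of e1] show False
  proof
    assume "conn (T - {e2} - {e1}) root w2"
    then have "conn (T - {e1}) root w2" by (rule conn_mono) auto
    moreover have "adj (T - {e1}) w2 u" using adj_in[OF assms(7) e2in] adj_sym by blast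
    ultimately have "conn (T - {e1}) root u" by (rule conn_step)
    with assms(8) show False by simp
  next
    assume "\<exists>a b. adj {e1} a b \<and> conn (T - {e2} - {e1}) root a"
    then obtain a b where ab: "adj {e1} a b" "conn (T - {e2} - {e1}) root a" by blast
    then have ca: "conn (T - {e2}) root a" by (rule_tac conn_mono) auto
    from adj_ends[OF assms(6) ab(1)] show False
    proof
      assume "a = u" with ca assms(9) show False by simp
    next
      assume "a = w1"
      moreover have "adj (T - {e2}) w1 u" using adj_in[OF assms(6) e1in] adj_sym by blast
      ultimately have "conn (T - {e2}) root u" using ca conn_step by blast
      with assms(9) show False by simp
    qed
  qed
qed

lemma exists_sep:
  assumes "spanning_tree n d T" "u \<in> vertices n d" "root \<in> vertices n d" "u \<noteq> root"
  shows "\<exists>e\<in>T. \<exists>w. adj {e} u w \<and> \<not> conn (T - {e}) root u"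
proof -
  let ?R = "{(a, b). adj T a b}"
  have acyc: "acyclic_graph T" using assms(1) unfolding spanning_tree_def by blast
  have "conn T root u" using assms(1-3) unfolding connected_on_def spanning_tree_def by blast
  then obtain k where "(root, u) \<in> ?R ^^ k" using rtrancl_power by blast
  define k0 where "k0 = (LEAST k. (root, u) \<in> ?R ^^ k)"
  have k0: "(root, u) \<in> ?R ^^ k0" unfolding k0_def by (rule LeastI) fact
  have min: "k0 \<le> m" if "(root, u) \<in> ?R ^^ m" for m
    unfolding k0_def using that by (rule Least_le)
  have "k0 \<noteq> 0" using k0 assms(4) by (cases k0) auto
  then obtain m where m: "k0 = Suc m" by (cases k0) auto
  with k0 obtain y where y: "(root, y) \<in> ?R ^^ m" "adj T y u" by (auto elim: relpow_Suc_E)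
  from y(2) obtain e where e: "e \<in> T" "adj {e} y u" unfolding adj_def by blast
  have "\<not> conn (T - {e}) root u"
  proof
    assume c: "conn (T - {e}) root u"
    from L2[OF y(1), of e] show False
    proof
      assume "conn (T - {e}) root y"
      then have "conn (T - {e}) y u" using c conn_sym rtrancl_trans by metis
      with bridge[OF acyc e(1) e(2)] show False by simp
    next
      assume "\<forall>a b. adj {e} a b \<longrightarrow> (\<exists>m'\<le>m. (root, a) \<in> ?R ^^ m')"
      moreover have "adj {e} u y" using e(2) adj_sym by blast
      ultimately obtain m' where "m' \<le> m" "(root, u) \<in> ?R ^^ m'" by blast
      with min m show False by fastforce
    qed
  qed
  then show ?thesis using e adj_sym by blast
qed

lemma rooted_tope:
  assumes T: "spanning_tree n d T" and r: "r \<in> {1..d}"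
  shows "\<exists>H \<subseteq> T. (\<forall>i\<in>{1..n}. ldeg H i = 1) \<and>
     (\<forall>j\<in>{1..d}. int (rdeg H j) = int (rdeg T j) - (if j \<noteq> r then 1 else 0))"
proof -
  define root where "root = (Inr r :: nat + nat)"
  have rootv: "root \<in> vertices n d" using r unfolding root_def vertices_def by auto
  have bip: "T \<subseteq> {1..n} \<times> {1..d}" using T unfolding spanning_tree_def bip_graph_def by blast
  have acyc: "acyclic_graph T" using T unfolding spanning_tree_def by blast
  have con: "connected_on n d T" using T unfolding spanning_tree_def by blast
  define H where "H = {(i, j) \<in> T. \<not> conn (T - {(i, j)}) root (Inl i)}"
  have HT: "H \<subseteq> T" unfolding H_def by blast
  have ldeg: "ldeg H i = 1" if i: "i \<in> {1..n}" for i
  proof -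
    have iv: "Inl i \<in> vertices n d" using i unfolding vertices_def by auto
    have "Inl i \<noteq> root" unfolding root_def by simp
    from exists_sep[OF T iv rootv this] obtain e w where
      e: "e \<in> T" "adj {e} (Inl i) w" "\<not> conn (T - {e}) root (Inl i)" by blast
    from e(2) have ei: "e = (i, snd e)" unfolding adj_single by (cases e) auto
    have "{j. (i, j) \<in> H} = {snd e}"
    proof (intro set_eqI iffI)
      fix j assume "j \<in> {j. (i, j) \<in> H}"
      then have j: "(i, j) \<in> T" "\<not> conn (T - {(i, j)}) root (Inl i)" unfolding H_def by auto
      have "adj {(i, j)} (Inl i) (Inr j)" unfolding adj_single by simp
      from uniq_sep[OF con iv rootv e(1) j(1) e(2) this e(3) j(2)] ei
      show "j \<in> {snd e}" by (metis prod.inject singletonI)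
    next
      fix j assume "j \<in> {snd e}"
      then show "j \<in> {j. (i, j) \<in> H}" using e ei unfolding H_def by (metis (no_types, lifting) case_prodI mem_Collect_eq singletonD)
    qed
    then show ?thesis unfolding ldeg_def by simp
  qed
  have rdeg: "int (rdeg H j) = int (rdeg T j) - (if j \<noteq> r then 1 else 0)" if j: "j \<in> {1..d}" for j
  proof -
    define A where "A = {i. (i, j) \<in> T}"
    define B where "B = {i. (i, j) \<in> T \<and> conn (T - {(i, j)}) root (Inl i)}"
    have finA: "finite A" unfolding A_def using bip
      by (rule_tac finite_subset[of _ "{1..n}"]) auto
    have BA: "B \<subseteq> A" unfolding A_def B_def by blast
    have HAB: "{i. (i, j) \<in> H} = A - B" unfolding H_def A_def B_def by auto
    have jv: "Inr j \<in> vertices n d" using j unfolding vertices_def by auto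
    have key: "conn (T - {(i, j)}) root (Inl i) \<longleftrightarrow> \<not> conn (T - {(i, j)}) root (Inr j)"
      if it: "(i, j) \<in> T" for i
    proof
      have ad: "adj {(i, j)} (Inl i) (Inr j)" unfolding adj_single by simp
      show "\<not> conn (T - {(i, j)}) root (Inr j)" if "conn (T - {(i, j)}) root (Inl i)"
      proof
        assume "conn (T - {(i, j)}) root (Inr j)"
        then have "conn (T - {(i, j)}) (Inl i) (Inr j)" using that conn_sym rtrancl_trans by metis
        with bridge[OF acyc it ad] show False by simp
      qed
      have iv: "Inl i \<in> vertices n d" using it bip unfolding vertices_def by auto
      show "conn (T - {(i, j)}) root (Inl i)" if "\<not> conn (T - {(i, j)}) root (Inr j)"
        using split_conn[OF con it ad iv rootv] that by blast
    qed
    have rdT: "rdeg T j = card A" unfolding rdeg_def A_def by simp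
    have rdH: "rdeg H j = card A - card B" unfolding rdeg_def HAB
      using card_Diff_subset[OF finite_subset[OF BA finA] BA] by simp
    show ?thesis
    proof (cases "j = r")
      case True
      then have "B = {}" unfolding B_def using key root_def by auto
      then show ?thesis using rdT rdH True by simp
    next
      case False
      have "Inr j \<noteq> root" unfolding root_def using False by simp
      from exists_sep[OF T jv rootv this] obtain e w where
        e: "e \<in> T" "adj {e} (Inr j) w" "\<not> conn (T - {e}) root (Inr j)" by blast
      from e(2) have ej: "e = (fst e, j)" unfolding adj_single by (cases e) auto
      have "B = {fst e}"
      proof (intro set_eqI iffI)
        fix i assume "i \<in> B"
        then have i: "(i, j) \<in> T" "\<not> conn (T - {(i, j)}) root (Inr j)" unfolding B_def using key by auto
        have "adj {(i, j)} (Inr j) (Inl i)" unfolding adj_single by simp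
        from uniq_sep[OF con jv rootv e(1) i(1) e(2) this e(3) i(2)] ej
        show "i \<in> {fst e}" by (metis prod.inject singletonI)
      next
        fix i assume "i \<in> {fst e}"
        then have "(i, j) \<in> T" "\<not> conn (T - {(i, j)}) root (Inr j)" using e ej by auto
        then show "i \<in> B" unfolding B_def using key by auto
      qed
      then have "card B = 1" by simp
      moreover have "card B \<le> card A" using card_mono[OF finA BA] .
      ultimately show ?thesis using rdT rdH False by simp
    qed
  qed
  show ?thesis using HT ldeg rdeg by blast
qed


lemma card1_the: "card {j. P j} = 1 \<Longrightarrow> {j. P j} = {THE j. P j}"
proof -
  assume "card {j. P j} = 1"
  then obtain x where x: "{j. P j} = {x}" by (rule card_1_singletonE)
  then have "P = (\<lambda>j. j = x)" by blast
  then show ?thesis using x by simp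
qed

lemma per_mult: "(\<rho> ^^ k) x = x \<Longrightarrow> (\<rho> ^^ (k * m)) x = x"
proof (induction m)
  case 0 then show ?case by simp
next
  case (Suc m)
  have "(\<rho> ^^ (k * Suc m)) x = (\<rho> ^^ k) ((\<rho> ^^ (k * m)) x)"
    by (simp add: funpow_add)
  then show ?case using Suc by simp
qed

lemma funpow_comm: "(\<rho> ^^ a) ((\<rho> ^^ b) x) = (\<rho> ^^ b) ((\<rho> ^^ a) x)"
proof -
  have "(\<rho> ^^ a) ((\<rho> ^^ b) x) = (\<rho> ^^ (a + b)) x" by (simp add: funpow_add)
  also have "\<dots> = (\<rho> ^^ (b + a)) x" by (simp add: add.commute)
  finally show ?thesis by (simp add: funpow_add)
qed

lemma periodic_core:
  fixes \<rho> :: "'a \<Rightarrow> 'a"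
  assumes fin: "finite V" and ne: "V \<noteq> {}" and cl: "\<And>x. x \<in> V \<Longrightarrow> \<rho> x \<in> V"
  shows "\<exists>I. I \<subseteq> V \<and> I \<noteq> {} \<and> inj_on \<rho> I \<and> \<rho> ` I = I"
proof -
  define P where "P = {x \<in> V. \<exists>k>0. (\<rho> ^^ k) x = x}"
  have clk: "(\<rho> ^^ t) x \<in> V" if "x \<in> V" for t x
    using that by (induction t) (auto intro: cl)
  obtain x0 where x0: "x0 \<in> V" using ne by blast
  define h where "h t = (\<rho> ^^ t) x0" for t
  have himg: "h ` {0..card V} \<subseteq> V" unfolding h_def using clk x0 by auto
  have "\<not> inj_on h {0..card V}"
  proof
    assume "inj_on h {0..card V}"
    then have "card (h ` {0..card V}) = card V + 1" by (simp add: card_image)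
    moreover have "card (h ` {0..card V}) \<le> card V" using card_mono[OF fin himg] .
    ultimately show False by simp
  qed
  then obtain a b where ab: "a < b" "h a = h b"
  proof -
    from \<open>\<not> inj_on h {0..card V}\<close> obtain a b where "a \<noteq> b" "h a = h b"
      unfolding inj_on_def by blast
    then consider "a < b" "h a = h b" | "b < a" "h b = h a" by (metis linorder_neqE_nat)
    then show ?thesis using that by cases blast+
  qed
  have "(\<rho> ^^ (b - a)) (h a) = h b"
  proof -
    have "(\<rho> ^^ (b - a)) (h a) = (\<rho> ^^ (b - a + a)) x0" unfolding h_def by (simp add: funpow_add)
    then show ?thesis using ab(1) unfolding h_def by simp
  qed
  then have per: "(\<rho> ^^ (b - a)) (h a) = h a" using ab(2) by simp
  have "b - a > 0" using ab(1) by simp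
  with per have "\<exists>k>0. (\<rho> ^^ k) (h a) = h a" by blast
  moreover have "h a \<in> V" using clk x0 h_def by simp
  ultimately have "h a \<in> P" unfolding P_def by blast
  then have Pne: "P \<noteq> {}" by blast
  have img: "\<rho> ` P = P"
  proof (intro set_eqI iffI)
    fix y assume "y \<in> \<rho> ` P"
    then obtain x k where x: "x \<in> V" "k > 0" "(\<rho> ^^ k) x = x" "y = \<rho> x" unfolding P_def by blast
    have "(\<rho> ^^ k) y = \<rho> ((\<rho> ^^ k) x)" using x(4) by (simp add: funpow_swap1)
    then have "(\<rho> ^^ k) y = y" using x(3,4) by simp
    then show "y \<in> P" unfolding P_def using x cl by auto
  next
    fix x assume "x \<in> P"
    then obtain k where x: "x \<in> V" "k > 0" "(\<rho> ^^ k) x = x" unfolding P_def by blast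
    then obtain k' where k': "k = Suc k'" by (cases k) auto
    have "(\<rho> ^^ k) ((\<rho> ^^ k') x) = (\<rho> ^^ k') x" using funpow_comm[of k \<rho> k' x] x(3) by simp
    then have "(\<rho> ^^ k') x \<in> P" unfolding P_def using x clk by auto
    moreover have "x = \<rho> ((\<rho> ^^ k') x)" using x(3) k' by simp
    ultimately show "x \<in> \<rho> ` P" by blast
  qed
  have inj: "inj_on \<rho> P"
  proof
    fix x y assume x: "x \<in> P" and y: "y \<in> P" and eq: "\<rho> x = \<rho> y"
    from x obtain k where k: "k > 0" "(\<rho> ^^ k) x = x" unfolding P_def by blast
    from y obtain l where l: "l > 0" "(\<rho> ^^ l) y = y" unfolding P_def by blast
    have "k * l > 0" using k l by simp
    then obtain m where m: "k * l = Suc m" by (cases "k * l") auto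
    have "x = (\<rho> ^^ (k * l)) x" using per_mult[OF k(2)] by simp
    also have "\<dots> = (\<rho> ^^ m) (\<rho> x)" using m by (simp add: funpow_Suc_right funpow_swap1)
    also have "\<dots> = (\<rho> ^^ m) (\<rho> y)" using eq by simp
    also have "\<dots> = (\<rho> ^^ (l * k)) y" using m by (simp add: funpow_Suc_right funpow_swap1 mult.commute)
    also have "\<dots> = y" using per_mult[OF l(2)] by simp
    finally show "x = y" .
  qed
  have "P \<subseteq> V" unfolding P_def by blast
  then show ?thesis using Pne inj img by blast
qed


lemma tope_unique:
  assumes comp: "compatible n d G1 G2"
    and m1: "maximal_tope n d w H1" and m2: "maximal_tope n d w H2"
    and s1: "H1 \<subseteq> G1" and s2: "H2 \<subseteq> G2"
  shows "H1 = H2"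
proof -
  have b1: "H1 \<subseteq> {1..n} \<times> {1..d}" using m1 unfolding maximal_tope_def bip_graph_def by blast
  have b2: "H2 \<subseteq> {1..n} \<times> {1..d}" using m2 unfolding maximal_tope_def bip_graph_def by blast
  define f where "f i = (THE j. (i, j) \<in> H1)" for i
  define g where "g i = (THE j. (i, j) \<in> H2)" for i
  have f1: "{j. (i, j) \<in> H1} = {f i}" if "i \<in> {1..n}" for i
    using card1_the[of "\<lambda>j. (i, j) \<in> H1"] m1 that unfolding maximal_tope_def ldeg_def f_def by simp
  have g1: "{j. (i, j) \<in> H2} = {g i}" if "i \<in> {1..n}" for i
    using card1_the[of "\<lambda>j. (i, j) \<in> H2"] m2 that unfolding maximal_tope_def ldeg_def g_def by simp
  have H1f: "(i, j) \<in> H1 \<longleftrightarrow> i \<in> {1..n} \<and> j = f i" for i j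
  proof
    assume a: "(i, j) \<in> H1"
    then have "i \<in> {1..n}" using b1 by auto
    then show "i \<in> {1..n} \<and> j = f i" using f1 a by blast
  next
    assume "i \<in> {1..n} \<and> j = f i"
    then show "(i, j) \<in> H1" using f1 by blast
  qed
  have H2g: "(i, j) \<in> H2 \<longleftrightarrow> i \<in> {1..n} \<and> j = g i" for i j
  proof
    assume a: "(i, j) \<in> H2"
    then have "i \<in> {1..n}" using b2 by auto
    then show "i \<in> {1..n} \<and> j = g i" using g1 a by blast
  next
    assume "i \<in> {1..n} \<and> j = g i"
    then show "(i, j) \<in> H2" using g1 by blast
  qed
  have fd: "f i \<in> {1..d}" if "i \<in> {1..n}" for i using H1f[of i "f i"] b1 that by blast
  have gd: "g i \<in> {1..d}" if "i \<in> {1..n}" for i using H2g[of i "g i"] b2 that by blast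
  define X where "X = {i \<in> {1..n}. f i \<noteq> g i}"
  have Xn: "X \<subseteq> {1..n}" unfolding X_def by blast
  have finX: "finite X" using Xn finite_subset by blast
  show ?thesis
  proof (cases "X = {}")
    case True
    then have fg: "\<forall>i\<in>{1..n}. f i = g i" unfolding X_def by blast
    have "\<forall>i j. (i, j) \<in> H1 \<longleftrightarrow> (i, j) \<in> H2" using fg by (auto simp: H1f H2g)
    then show ?thesis by (simp add: set_eq_iff)
  next
    case False
    have bal: "card {i \<in> X. f i = y} = card {i \<in> X. g i = y}" if y: "y \<in> {1..d}" for y
    proof -
      have e1: "{i. (i, y) \<in> H1} = {i \<in> {1..n}. f i = y}" using H1f by auto
      have e2: "{i. (i, y) \<in> H2} = {i \<in> {1..n}. g i = y}" using H2g by auto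
      have "int (rdeg H1 y) = w y" "int (rdeg H2 y) = w y"
        using m1 m2 y unfolding maximal_tope_def by auto
      then have c0: "card {i \<in> {1..n}. f i = y} = card {i \<in> {1..n}. g i = y}"
        unfolding rdeg_def e1 e2 by simp
      have eqF: "{i \<in> {1..n}. f i = y} = {i \<in> X. f i = y} \<union> {i \<in> {1..n} - X. g i = y}"
        unfolding X_def by auto
      have eqG: "{i \<in> {1..n}. g i = y} = {i \<in> X. g i = y} \<union> {i \<in> {1..n} - X. g i = y}"
        unfolding X_def by auto
      have cF: "card ({i \<in> X. f i = y} \<union> {i \<in> {1..n} - X. g i = y}) =
          card {i \<in> X. f i = y} + card {i \<in> {1..n} - X. g i = y}"
        by (rule card_Un_disjoint) (use finX in auto)
      have cG: "card ({i \<in> X. g i = y} \<union> {i \<in> {1..n} - X. g i = y}) =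
          card {i \<in> X. g i = y} + card {i \<in> {1..n} - X. g i = y}"
        by (rule card_Un_disjoint) (use finX in auto)
      have "card {i \<in> X. f i = y} + card {i \<in> {1..n} - X. g i = y} =
          card {i \<in> X. g i = y} + card {i \<in> {1..n} - X. g i = y}"
        using c0 cF cG by (simp only: eqF eqG)
      then show ?thesis by linarith
    qed
    define V where "V = f ` X"
    define \<tau> where "\<tau> x = (SOME i. i \<in> X \<and> f i = x)" for x
    have \<tau>: "\<tau> x \<in> X \<and> f (\<tau> x) = x" if "x \<in> V" for x
    proof -
      from that obtain i where "i \<in> X" "f i = x" unfolding V_def by blast
      then show ?thesis unfolding \<tau>_def by (rule_tac someI_ex) blast
    qed
    define \<rho> where "\<rho> x = g (\<tau> x)" for x
    have finV: "finite V" unfolding V_def using finX by simp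
    have neV: "V \<noteq> {}" unfolding V_def using False by simp
    have cl: "\<rho> x \<in> V" if x: "x \<in> V" for x
    proof -
      define y where "y = g (\<tau> x)"
      have tx: "\<tau> x \<in> X" using \<tau>[OF x] by blast
      then have yd: "y \<in> {1..d}" unfolding y_def using gd Xn by blast
      have "\<tau> x \<in> {i \<in> X. g i = y}" using tx y_def by simp
      moreover have "finite {i \<in> X. g i = y}" using finX by simp
      ultimately have "card {i \<in> X. g i = y} > 0" using card_gt_0_iff by blast
      then have "card {i \<in> X. f i = y} > 0" using bal[OF yd] by simp
      then have "finite {i \<in> X. f i = y} \<and> {i \<in> X. f i = y} \<noteq> {}" using card_gt_0_iff[of "{i \<in> X. f i = y}"] by blast
      then have "{i \<in> X. f i = y} \<noteq> {}" by (rule conjunct2)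
      then obtain i where i: "i \<in> X" "f i = y" by blast
      have "y \<in> f ` X" by (rule image_eqI[of _ f i]) (use i in simp_all)
      then show ?thesis unfolding \<rho>_def V_def y_def .
    qed
    have exI: "\<exists>I. I \<subseteq> V \<and> I \<noteq> {} \<and> inj_on \<rho> I \<and> \<rho> ` I = I"
    proof (rule periodic_core)
      show "finite V" by (rule finV)
      show "V \<noteq> {}" by (rule neV)
      fix x assume "x \<in> V" then show "\<rho> x \<in> V" by (rule cl)
    qed
    from exI obtain I where
      I: "I \<subseteq> V" "I \<noteq> {}" "inj_on \<rho> I" "\<rho> ` I = I"
      by (elim exE conjE)
    have tinj: "x = y" if "x \<in> V" "y \<in> V" "\<tau> x = \<tau> y" for x y
    proof -
      have "x = f (\<tau> x)" "y = f (\<tau> y)" using \<tau>[OF that(1)] \<tau>[OF that(2)] by auto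
      then show ?thesis using that(3) by simp
    qed
    have tn: "\<tau> x \<in> {1..n}" if "x \<in> V" for x using \<tau>[OF that] Xn by blast
    have Vd: "V \<subseteq> {1..d}" unfolding V_def using fd Xn by blast
    define J where "J = \<tau> ` I"
    define M1 where "M1 = (\<lambda>x. (\<tau> x, x)) ` I"
    define M2 where "M2 = (\<lambda>x. (\<tau> x, \<rho> x)) ` I"
    have pm1: "perfect_matching G1 J I M1"
      unfolding perfect_matching_def
    proof (intro conjI ballI)
      show "M1 \<subseteq> G1"
      proof
        fix e assume "e \<in> M1"
        then obtain x where x: "x \<in> I" "e = (\<tau> x, x)" unfolding M1_def by blast
        have xV: "x \<in> V" using x(1) I(1) by blast
        have "(\<tau> x, x) \<in> H1" unfolding H1f using tn[OF xV] \<tau>[OF xV] by simp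
        then show "e \<in> G1" using s1 x(2) by blast
      qed
      show "M1 \<subseteq> J \<times> I" unfolding M1_def J_def by blast
      fix i assume "i \<in> J"
      then obtain x where x: "x \<in> I" "i = \<tau> x" unfolding J_def by blast
      show "\<exists>!j. (i, j) \<in> M1"
      proof (rule ex1I)
        show "(i, x) \<in> M1" using x unfolding M1_def by blast
        fix j assume "(i, j) \<in> M1"
        then obtain z where z: "z \<in> I" "(i, j) = (\<tau> z, z)" unfolding M1_def by blast
        have c: "i = \<tau> z \<and> j = z" by (rule prod.inject[THEN iffD1, OF z(2)])
        have "x = z" by (rule tinj) (use x z(1) I(1) c in auto)
        then show "j = x" using c by simp
      qed
    next
      fix j assume j: "j \<in> I"
      show "\<exists>!i. (i, j) \<in> M1"
      proof (rule ex1I)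
        show "(\<tau> j, j) \<in> M1" using j unfolding M1_def by blast
        fix i assume "(i, j) \<in> M1"
        then obtain z where z: "z \<in> I" "(i, j) = (\<tau> z, z)" unfolding M1_def by blast
        have c: "i = \<tau> z \<and> j = z" by (rule prod.inject[THEN iffD1, OF z(2)])
        then show "i = \<tau> j" by simp
      qed
    qed
    have rI: "\<rho> x \<in> I" if "x \<in> I" for x using I(4) imageI[OF that, of \<rho>] by simp
    have pm2: "perfect_matching G2 J I M2"
      unfolding perfect_matching_def
    proof (intro conjI ballI)
      show "M2 \<subseteq> G2"
      proof
        fix e assume "e \<in> M2"
        then obtain x where x: "x \<in> I" "e = (\<tau> x, \<rho> x)" unfolding M2_def by blast
        have xV: "x \<in> V" using x(1) I(1) by blast
        have "(\<tau> x, g (\<tau> x)) \<in> H2" unfolding H2g using tn[OF xV] by simp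
        then show "e \<in> G2" using s2 x(2) unfolding \<rho>_def by blast
      qed
      show "M2 \<subseteq> J \<times> I" unfolding M2_def J_def using rI by blast
      fix i assume "i \<in> J"
      then obtain x where x: "x \<in> I" "i = \<tau> x" unfolding J_def by blast
      show "\<exists>!j. (i, j) \<in> M2"
      proof (rule ex1I)
        show "(i, \<rho> x) \<in> M2" using x unfolding M2_def by blast
        fix j assume "(i, j) \<in> M2"
        then obtain z where z: "z \<in> I" "(i, j) = (\<tau> z, \<rho> z)" unfolding M2_def by blast
        have c: "i = \<tau> z \<and> j = \<rho> z" by (rule prod.inject[THEN iffD1, OF z(2)])
        have "x = z" by (rule tinj) (use x z(1) I(1) c in auto)
        then show "j = \<rho> x" using c by simp
      qed
    next
      fix j assume j: "j \<in> I"
      then have "j \<in> \<rho> ` I" using I(4) by simp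
      then obtain x where x: "x \<in> I" "j = \<rho> x" by blast
      show "\<exists>!i. (i, j) \<in> M2"
      proof (rule ex1I)
        show "(\<tau> x, j) \<in> M2" unfolding M2_def using x by blast
        fix i assume "(i, j) \<in> M2"
        then obtain z where z: "z \<in> I" "(i, j) = (\<tau> z, \<rho> z)" unfolding M2_def by blast
        have c: "i = \<tau> z \<and> j = \<rho> z" by (rule prod.inject[THEN iffD1, OF z(2)])
        have "\<rho> z = \<rho> x" using c x(2) by simp
        then have "z = x" by (rule inj_onD[OF I(3)]) (use z(1) x(1) in auto)
        then show "i = \<tau> x" using c by simp
      qed
    qed
    have Jn: "J \<subseteq> {1..n}" unfolding J_def using tn I(1) by blast
    have Id: "I \<subseteq> {1..d}" using I(1) Vd by blast
    have "M1 = M2"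
      by (rule comp[unfolded compatible_def, rule_format, OF Jn Id conjI[OF pm1 pm2]])
    obtain x where x: "x \<in> I" using I(2) by blast
    have xV: "x \<in> V" using x I(1) by blast
    have "(\<tau> x, x) \<in> M1" unfolding M1_def using x by blast
    then have "(\<tau> x, x) \<in> M2" using \<open>M1 = M2\<close> by simp
    then obtain z where z: "z \<in> I" "(\<tau> x, x) = (\<tau> z, \<rho> z)" unfolding M2_def by blast
    have zV: "z \<in> V" using z(1) I(1) by blast
    have tzxz: "\<tau> x = \<tau> z \<and> x = \<rho> z" by (rule prod.inject[THEN iffD1, OF z(2)])
    have tz: "\<tau> x = \<tau> z" using tzxz by (rule conjunct1)
    have xz: "x = \<rho> z" using tzxz by (rule conjunct2)
    have "x = z" using tinj[OF xV zV tz] .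
    then have "g (\<tau> x) = x" using xz unfolding \<rho>_def by simp
    moreover have "f (\<tau> x) = x" "\<tau> x \<in> X" using \<tau>[OF xV] by simp_all
    ultimately have False unfolding X_def by simp
    then show ?thesis ..
  qed
qed


theorem corollary2p10:
  fixes n d p q :: nat and T1 T2 :: "(nat \<times> nat) set" and v :: "nat \<Rightarrow> int"
  assumes "spanning_tree n d T1" and "spanning_tree n d T2"
    and "compatible n d T1 T2"
    and "p \<in> {1..d}" and "q \<in> {1..d}"
    and "\<forall>j\<in>{1..d}. int (rdeg T1 j) = v j"
    and "\<forall>j\<in>{1..d}. int (rdeg T2 j) = v j + (if j = p then 1 else 0) - (if j = q then 1 else 0)"
  shows "(\<exists>H. H \<subseteq> T1 \<inter> T2 \<and> maximal_tope n d (\<lambda>j. v j - (if j \<noteq> p then 1 else 0)) H)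
    \<and> (\<forall>s\<in>{1..n}. ldeg T1 s = 1 \<and> ldeg T2 s = 1 \<longrightarrow>
          {e \<in> T1. fst e = s} = {e \<in> T2. fst e = s})"
proof -
  define w where "w = (\<lambda>j. v j - (if j \<noteq> p then 1 else 0))"
  obtain H1 where H1: "H1 \<subseteq> T1" "\<forall>i\<in>{1..n}. ldeg H1 i = 1"
    "\<forall>j\<in>{1..d}. int (rdeg H1 j) = int (rdeg T1 j) - (if j \<noteq> p then 1 else 0)"
    using rooted_tope[OF assms(1) assms(4)] by blast
  obtain H2 where H2: "H2 \<subseteq> T2" "\<forall>i\<in>{1..n}. ldeg H2 i = 1"
    "\<forall>j\<in>{1..d}. int (rdeg H2 j) = int (rdeg T2 j) - (if j \<noteq> q then 1 else 0)"
    using rooted_tope[OF assms(2) assms(5)] by blast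
  have b1: "T1 \<subseteq> {1..n} \<times> {1..d}" using assms(1) unfolding spanning_tree_def bip_graph_def by blast
  have b2: "T2 \<subseteq> {1..n} \<times> {1..d}" using assms(2) unfolding spanning_tree_def bip_graph_def by blast
  have m1: "maximal_tope n d w H1"
    unfolding maximal_tope_def bip_graph_def w_def using H1 b1 assms(6) by auto
  have m2: "maximal_tope n d w H2"
    unfolding maximal_tope_def bip_graph_def w_def using H2 b2 assms(7) by auto
  have eq: "H1 = H2" by (rule tope_unique[OF assms(3) m1 m2 H1(1) H2(1)])
  have part1: "\<exists>H. H \<subseteq> T1 \<inter> T2 \<and> maximal_tope n d w H"
    using m1 H1(1) H2(1) eq by blast
  have part2: "{e \<in> T1. fst e = s} = {e \<in> T2. fst e = s}"
    if s: "s \<in> {1..n}" and l1: "ldeg T1 s = 1" and l2: "ldeg T2 s = 1" for s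
  proof -
    have a1: "{j. (s, j) \<in> T1} = {THE j. (s, j) \<in> T1}"
      using card1_the[of "\<lambda>j. (s, j) \<in> T1"] l1 unfolding ldeg_def by simp
    have a2: "{j. (s, j) \<in> T2} = {THE j. (s, j) \<in> T2}"
      using card1_the[of "\<lambda>j. (s, j) \<in> T2"] l2 unfolding ldeg_def by simp
    have ah: "{j. (s, j) \<in> H1} = {THE j. (s, j) \<in> H1}"
      using card1_the[of "\<lambda>j. (s, j) \<in> H1"] H1(2) s unfolding ldeg_def by simp
    have "{j. (s, j) \<in> H1} \<subseteq> {j. (s, j) \<in> T1}" using H1(1) by blast
    then have e1: "{j. (s, j) \<in> T1} = {j. (s, j) \<in> H1}" using a1 ah by auto
    have "{j. (s, j) \<in> H1} \<subseteq> {j. (s, j) \<in> T2}" using H2(1) eq by blast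
    then have e2: "{j. (s, j) \<in> T2} = {j. (s, j) \<in> H1}" using a2 ah by auto
    have key: "(s, j) \<in> T1 \<longleftrightarrow> (s, j) \<in> T2" for j using e1 e2 by blast
    show ?thesis
    proof (intro set_eqI)
      fix e :: "nat \<times> nat"
      obtain a b where "e = (a, b)" by (cases e)
      then show "e \<in> {e \<in> T1. fst e = s} \<longleftrightarrow> e \<in> {e \<in> T2. fst e = s}" using key by auto
    qed
  qed
  show ?thesis using part1 part2 unfolding w_def by blast
qed


end
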